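(* Let $m,n\in\mathbb{N}$ and let $\psi:\mathbb{F}[X]^m\to\{k^r:r\in\mathbb{Z}\}\cup\{0\}$ be bounded with $\psi(\mathbf{q})>0$ for infinitely many $\mathbf{q}$. Then $$\dim_H\mathcal{W}(m,n;\psi)\le n(m-1)+\min\{\eta(\psi),n\}.$$
   Context: $\mathbb{F}$ is a finite field with $k$ elements; $\mathbb{F}((X^{-1}))$ is the field of formal Laurent series in $X^{-1}$ over $\mathbb{F}$ with absolute value $|f|=k^{\deg f}$ ($|0|=0$). On vectors, $|\mathbf{x}|_\infty=\max_i|x_i|$; matrices in $\mathrm{Mat}_{m\times n}(\mathbb{F}((X^{-1})))$ are identified with vectors in $\mathbb{F}((X^{-1}))^{mn}$. For $\mathbf{v}\in\mathbb{F}((X^{-1}))^n$, $\|\mathbf{v}\|$ is the $|\cdot|_\infty$-distance from $\mathbf{v}$ to $\mathbb{F}[X]^n$. $\mathcal{W}(m,n;\psi)=\{A\in\mathrm{Mat}_{m\times n}(\mathbb{F}((X^{-1}))):\|\mathbf{q}A\|<\psi(\mathbf{q})\text{ for infinitely many }\mathbf{q}\in\mathbb{F}[X]^m\}$. $\eta(\psi)=\inf\{\eta\in\mathbb{R}:\sum_{\mathbf{q}\in\mathbb{F}[X]^m\setminus\{0\}}|\mathbf{q}|_\infty^n(\psi(\mathbf{q})/|\mathbf{q}|_\infty)^\eta<\infty\}$. $\dim_H$ is Hausdorff dimension. *)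

theory Defs
  imports "HOL-Analysis.Analysis" "HOL-Computational_Algebra.Formal_Laurent_Series"
begin

text \<open>The field F((X^{-1})) of formal Laurent series in X^{-1} over a finite field F
  is modelled as the type 'a fls of Laurent series in the variable T = X^{-1}
  (Isabelle's fls_X plays the role of X^{-1}, fls_X_inv the role of X).
  The degree in X of a nonzero series f is then  - fls_subdegree f.\<close>

definition lsabs :: "'a::{field,finite} fls \<Rightarrow> real" where
  "lsabs f = (if f = 0 then 0 else real CARD('a) powr (real_of_int (- fls_subdegree f)))"

definition poly_to_ls :: "'a::{field,finite} poly \<Rightarrow> 'a fls" where
  "poly_to_ls p = poly (map_poly fls_const p) fls_X_inv"

definition vnorm :: "'a::{field,finite} fls ^ 'n::finite \<Rightarrow> real" where
  "vnorm v = Max (range (\<lambda>j. lsabs (v $ j)))"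

definition pnorm :: "'a::{field,finite} poly ^ 'm::finite \<Rightarrow> real" where
  "pnorm q = vnorm (\<chi> i. poly_to_ls (q $ i))"

definition dist_int :: "'a::{field,finite} fls ^ 'n::finite \<Rightarrow> real" where
  "dist_int v = (INF p \<in> (UNIV :: ('a poly ^ 'n) set). vnorm (v - (\<chi> j. poly_to_ls (p $ j))))"

definition qA :: "'a::{field,finite} poly ^ 'm::finite \<Rightarrow> 'a fls ^ 'n::finite ^ 'm \<Rightarrow> 'a fls ^ 'n" where
  "qA q A = (\<chi> i. poly_to_ls (q $ i)) v* A"

definition W_set :: "('a::{field,finite} poly ^ 'm::finite \<Rightarrow> real) \<Rightarrow> ('a fls ^ 'n::finite ^ 'm) set" where
  "W_set psi = {A. infinite {q. dist_int (qA q A) < psi q}}"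

definition eta :: "('a::{field,finite} poly ^ 'm::finite \<Rightarrow> real) \<Rightarrow> 'n::finite itself \<Rightarrow> ereal" where
  "eta psi _ = Inf {ereal e | e. (\<lambda>q. pnorm q ^ CARD('n) * (psi q / pnorm q) powr e)
                     summable_on (UNIV - {0})}"

text \<open>Matrices are identified with vectors in F((X^{-1}))^{mn}: sup-norm distance\<close>
definition mdist :: "'a::{field,finite} fls ^ 'n::finite ^ 'm::finite \<Rightarrow> 'a fls ^ 'n ^ 'm \<Rightarrow> real" where
  "mdist A B = Max (range (\<lambda>(i,j). lsabs ((A - B) $ i $ j)))"

definition gdiam :: "('x \<Rightarrow> 'x \<Rightarrow> real) \<Rightarrow> 'x set \<Rightarrow> ereal" where
  "gdiam d U = Sup {ereal (d x y) | x y. x \<in> U \<and> y \<in> U}"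

definition cover_term :: "('x \<Rightarrow> 'x \<Rightarrow> real) \<Rightarrow> real \<Rightarrow> 'x set \<Rightarrow> ennreal" where
  "cover_term d s U = (if U = {} then 0
      else if gdiam d U = 0 then (if s = 0 then 1 else 0)
      else ennreal (real_of_ereal (gdiam d U) powr s))"

definition hausdorff_delta :: "('x \<Rightarrow> 'x \<Rightarrow> real) \<Rightarrow> real \<Rightarrow> real \<Rightarrow> 'x set \<Rightarrow> ennreal" where
  "hausdorff_delta d s \<delta> S = (INF U \<in> {U :: nat \<Rightarrow> 'x set. S \<subseteq> (\<Union>i. U i) \<and> (\<forall>i. gdiam d (U i) \<le> ereal \<delta>)}.
       (\<Sum>i. cover_term d s (U i)))"

definition hausdorff_measure :: "('x \<Rightarrow> 'x \<Rightarrow> real) \<Rightarrow> real \<Rightarrow> 'x set \<Rightarrow> ennreal" where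
  "hausdorff_measure d s S = (SUP \<delta> \<in> {0<..}. hausdorff_delta d s \<delta> S)"

definition hausdorff_dim :: "('x \<Rightarrow> 'x \<Rightarrow> real) \<Rightarrow> 'x set \<Rightarrow> ereal" where
  "hausdorff_dim d S = Inf {ereal s | s. s \<ge> 0 \<and> hausdorff_measure d s S = 0}"

end

theory Submission
  imports Defs
begin

no_notation fps_nth (infixl "$" 75)

definition sm :: "int \<Rightarrow> 'a::zero fls \<Rightarrow> bool" where
  "sm t f \<longleftrightarrow> (\<forall>l<t. fls_nth f l = 0)"

lemma sm_add: "sm t f \<Longrightarrow> sm t g \<Longrightarrow> sm t (f + g)"
  by (simp add: sm_def)
lemma sm_diff: "sm t f \<Longrightarrow> sm t (g::'a::ab_group_add fls) \<Longrightarrow> sm t (f - g)"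
  by (simp add: sm_def)
lemma sm_uminus: "sm t (f::'a::ab_group_add fls) \<Longrightarrow> sm t (- f)"
  by (simp add: sm_def)
lemma sm_zero[simp]: "sm t 0" by (simp add: sm_def)
lemma sm_mono: "sm t f \<Longrightarrow> t' \<le> t \<Longrightarrow> sm t' f"
  by (simp add: sm_def)
lemma sm_sum: "(\<And>i. i \<in> I \<Longrightarrow> sm t (f i)) \<Longrightarrow> sm t (\<Sum>i\<in>I. f i)"
  by (induction I rule: infinite_finite_induct) (auto intro: sm_add)

lemma sm_iff_subdeg: "sm t f \<longleftrightarrow> f = 0 \<or> t \<le> fls_subdegree f"
proof
  assume "sm t f" then show "f = 0 \<or> t \<le> fls_subdegree f"
    using fls_subdegree_geI[of f t] by (auto simp: sm_def)
next
  assume "f = 0 \<or> t \<le> fls_subdegree f" then show "sm t f"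
    by (auto simp: sm_def)
qed

lemma sm_subdeg: "sm (fls_subdegree f) f"
  by (simp add: sm_iff_subdeg)

lemma sm_mult: "sm a f \<Longrightarrow> sm b g \<Longrightarrow> sm (a+b) (f * (g::'a::field fls))"
  by (cases "f = 0"; cases "g = 0") (auto simp: sm_iff_subdeg)

lemma sm_cancel:
  assumes "g \<noteq> 0" "sm a (g * (f::'a::field fls))"
  shows "sm (a - fls_subdegree g) f"
  using assms by (cases "f = 0") (auto simp: sm_iff_subdeg)

abbreviation kk :: "'a itself \<Rightarrow> real" where "kk _ \<equiv> real CARD('a)"

lemma card_field_ge2: "CARD('a::{field,finite}) \<ge> 2"
proof -
  have "card {0::'a, 1} = 2" by simp
  moreover have "card {0::'a, 1} \<le> CARD('a)" by (rule card_mono) auto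
  ultimately show ?thesis by simp
qed

lemma lsabs_nonneg: "lsabs (f::'a::{field,finite} fls) \<ge> 0"
  by (simp add: lsabs_def)

lemma lsabs_le_iff: "lsabs (f::'a::{field,finite} fls) \<le> real CARD('a) powr (- real_of_int t) \<longleftrightarrow> sm t f"
proof -
  have k: "real CARD('a) > 1" using card_field_ge2[where 'a='a] by linarith
  show ?thesis
    by (cases "f = 0") (use k in \<open>auto simp: lsabs_def sm_iff_subdeg\<close>)
qed

lemma lsabs_less_iff: "lsabs (f::'a::{field,finite} fls) < real CARD('a) powr (- real_of_int t) \<longleftrightarrow> sm (t+1) f"
proof -
  have k: "real CARD('a) > 1" using card_field_ge2[where 'a='a] by linarith
  show ?thesis
    by (cases "f = 0") (use k in \<open>auto simp: lsabs_def sm_iff_subdeg\<close>)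
qed

lemma poly_to_ls_nth:
  "fls_nth (poly_to_ls (p::'a::{field,finite} poly)) l = (if l \<le> 0 then coeff p (nat (-l)) else 0)"
proof (induction p arbitrary: l)
  case 0
  then show ?case by (simp add: poly_to_ls_def)
next
  case (pCons a p)
  have e: "poly_to_ls (pCons a p) = fls_const a + fls_X_inv * poly_to_ls p"
    by (simp add: poly_to_ls_def map_poly_pCons)
  show ?case
  proof (cases "l = 0")
    case True then show ?thesis using pCons.IH[of 1] by (simp add: e fls_X_inv_times_conv_shift)
  next
    case False
    show ?thesis
    proof (cases "l < 0")
      case True
      then have "nat (-l) = Suc (nat (-(l+1)))" by simp
      then show ?thesis using pCons.IH[of "l+1"] True
        by (simp add: e fls_X_inv_times_conv_shift coeff_pCons)
    next
      case False
      then show ?thesis using pCons.IH[of "l+1"] \<open>l \<noteq> 0\<close>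
        by (simp add: e fls_X_inv_times_conv_shift)
    qed
  qed
qed


lemma poly_to_ls_pos: "l > 0 \<Longrightarrow> fls_nth (poly_to_ls (p::'a::{field,finite} poly)) l = 0"
  by (simp add: poly_to_ls_nth)

lemma poly_to_ls_sm: "degree (p::'a::{field,finite} poly) \<le> D \<Longrightarrow> sm (- int D) (poly_to_ls p)"
  unfolding sm_def by (auto simp: poly_to_ls_nth intro!: coeff_eq_0)

lemma poly_to_ls_lead: "fls_nth (poly_to_ls (p::'a::{field,finite} poly)) (- int (degree p)) = lead_coeff p"
  by (simp add: poly_to_ls_nth)

lemma poly_to_ls_ne0: "p \<noteq> 0 \<Longrightarrow> poly_to_ls (p::'a::{field,finite} poly) \<noteq> 0"
  using poly_to_ls_lead[of p] by auto

lemma poly_to_ls_subdeg: "p \<noteq> 0 \<Longrightarrow> fls_subdegree (poly_to_ls (p::'a::{field,finite} poly)) = - int (degree p)"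
proof (rule fls_subdegree_eqI)
  assume "p \<noteq> 0" then show "fls_nth (poly_to_ls p) (- int (degree p)) \<noteq> 0"
    using poly_to_ls_lead[of p] by simp
next
  fix k assume "k < - int (degree p)"
  then show "fls_nth (poly_to_ls p) k = 0"
    by (auto simp: poly_to_ls_nth intro!: coeff_eq_0)
qed

lemma lsabs_poly: "p \<noteq> 0 \<Longrightarrow> lsabs (poly_to_ls (p::'a::{field,finite} poly)) = real CARD('a) ^ degree p"
  using card_field_ge2[where 'a='a]
  by (simp add: lsabs_def poly_to_ls_ne0 poly_to_ls_subdeg powr_realpow)

lemma poly_to_ls_0[simp]: "poly_to_ls 0 = 0"
  by (simp add: poly_to_ls_def)

definition Dq :: "'a::zero poly ^ 'm::finite \<Rightarrow> nat" where
  "Dq q = Max (range (\<lambda>i. degree (q $ i)))"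

lemma degree_le_Dq: "degree (q $ i) \<le> Dq q"
  unfolding Dq_def by (rule Max_ge) auto

lemma Dq_ex: assumes "q \<noteq> 0" shows "\<exists>i. q $ i \<noteq> 0 \<and> degree (q $ i) = Dq q"
proof -
  have "Dq q \<in> range (\<lambda>i. degree (q $ i))" unfolding Dq_def by (rule Max_in) auto
  then obtain i where i: "degree (q $ i) = Dq q" by auto
  obtain j where j: "q $ j \<noteq> 0" using assms by (auto simp: vec_eq_iff)
  show ?thesis
  proof (cases "q $ i = 0")
    case True
    then have "Dq q = 0" using i by simp
    then show ?thesis using j degree_le_Dq[of q j] by auto
  qed (use i in auto)
qed

definition i0 :: "'a::zero poly ^ 'm::finite \<Rightarrow> 'm" where
  "i0 q = (SOME i. q $ i \<noteq> 0 \<and> degree (q $ i) = Dq q)"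

lemma i0: "q \<noteq> 0 \<Longrightarrow> q $ i0 q \<noteq> 0 \<and> degree (q $ i0 q) = Dq q"
  unfolding i0_def using Dq_ex by (rule someI_ex)

lemma pnorm_eq: assumes "q \<noteq> 0"
  shows "pnorm (q::'a::{field,finite} poly ^ 'm::finite) = real CARD('a) ^ Dq q"
proof -
  have k: "real CARD('a) \<ge> 1" using card_field_ge2[where 'a='a] by linarith
  have "Max (range (\<lambda>i. lsabs (poly_to_ls (q $ i)))) = real CARD('a) ^ Dq q"
  proof (rule Max_eqI)
    fix y assume "y \<in> range (\<lambda>i. lsabs (poly_to_ls (q $ i)))"
    then obtain i where y: "y = lsabs (poly_to_ls (q $ i))" by auto
    show "y \<le> real CARD('a) ^ Dq q"
    proof (cases "q $ i = 0")
      case False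
      then show ?thesis using y lsabs_poly[OF False] degree_le_Dq[of q i] k
        by (simp add: power_increasing)
    qed (use y in \<open>auto simp: lsabs_def\<close>)
  next
    show "real CARD('a) ^ Dq q \<in> range (\<lambda>i. lsabs (poly_to_ls (q $ i)))"
      using i0[OF assms] lsabs_poly[of "q $ i0 q"] by (metis rangeI)
  qed auto
  then show ?thesis by (simp add: pnorm_def vnorm_def)
qed

lemma finite_deg_bounded: "finite {q::'a::{zero,finite} poly ^ 'm::finite. \<forall>i. degree (q $ i) \<le> M}"
proof -
  let ?S = "{q::'a poly ^ 'm. \<forall>i. degree (q $ i) \<le> M}"
  let ?f = "\<lambda>q::'a poly ^ 'm. restrict (\<lambda>(i,l). coeff (q $ i) l) (UNIV \<times> {..M})"
  have "inj_on ?f ?S"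
  proof (rule inj_onI)
    fix q q' assume q: "q \<in> ?S" and q': "q' \<in> ?S" and eq: "?f q = ?f q'"
    show "q = q'"
    proof (subst vec_eq_iff, intro allI, subst poly_eq_iff, intro allI)
      fix i n
      show "coeff (q $ i) n = coeff (q' $ i) n"
      proof (cases "n \<le> M")
        case True
        then show ?thesis using fun_cong[OF eq, of "(i,n)"] by simp
      next
        case False
        have "degree (q $ i) < n" "degree (q' $ i) < n" using q q' False by (auto dest!: spec[of _ i])
        then show ?thesis by (simp add: coeff_eq_0)
      qed
    qed
  qed
  moreover have "?f ` ?S \<subseteq> PiE (UNIV \<times> {..M}) (\<lambda>_. UNIV)"
    by (auto simp: PiE_def extensional_def)
  moreover have "finite (PiE ((UNIV :: 'm set) \<times> {..M}) (\<lambda>_. UNIV :: 'a set))"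
    by (rule finite_PiE) auto
  ultimately show ?thesis by (meson finite_imageD finite_subset)
qed

lemma vnorm_ge: "lsabs (v $ j) \<le> vnorm v"
  unfolding vnorm_def by (rule Max_ge) auto

lemma vnorm_nonneg: "vnorm v \<ge> 0"
  by (meson order_trans lsabs_nonneg vnorm_ge)

lemma vnorm_less: "vnorm v < x \<longleftrightarrow> (\<forall>j. lsabs (v $ j) < x)"
  unfolding vnorm_def by (subst Max_less_iff) auto

lemma dist_int_nonneg: "dist_int v \<ge> 0"
  unfolding dist_int_def by (rule cINF_greatest) (auto simp: vnorm_nonneg)

lemma dist_int_less:
  assumes "dist_int v < x"
  shows "\<exists>P::'a::{field,finite} poly ^ 'n::finite. \<forall>j. lsabs (v $ j - poly_to_ls (P $ j)) < x"
proof -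
  have "bdd_below ((\<lambda>p::'a poly ^ 'n. vnorm (v - (\<chi> j. poly_to_ls (p $ j)))) ` UNIV)"
    by (rule bdd_belowI[of _ 0]) (auto simp: vnorm_nonneg)
  then obtain P :: "'a poly ^ 'n" where "vnorm (v - (\<chi> j. poly_to_ls (P $ j))) < x"
    using assms unfolding dist_int_def by (subst (asm) cINF_less_iff) auto
  then show ?thesis by (auto simp: vnorm_less)
qed

lemma dist_int_zero: "dist_int (0 :: 'a::{field,finite} fls ^ 'n::finite) \<le> 0"
proof -
  have "bdd_below ((\<lambda>p::'a poly ^ 'n. vnorm (0 - (\<chi> j. poly_to_ls (p $ j)))) ` UNIV)"
    by (rule bdd_belowI[of _ 0]) (auto simp: vnorm_nonneg)
  then have "dist_int (0 :: 'a fls ^ 'n) \<le> vnorm (0 - (\<chi> j. poly_to_ls ((0::'a poly ^ 'n) $ j)))"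
    unfolding dist_int_def by (rule cINF_lower) auto
  also have "\<dots> = 0" unfolding vnorm_def by (simp add: lsabs_def)
  finally show ?thesis .
qed

lemma qA_nth: "qA q A $ j = (\<Sum>i\<in>UNIV. poly_to_ls (q $ i) * A $ i $ j)"
  by (simp add: qA_def vector_matrix_mult_def)

lemma qA_zero: "qA q 0 = 0"
  by (simp add: qA_def vector_matrix_mult_def vec_eq_iff)

lemma mdist_le: "(\<And>i j. lsabs (A $ i $ j - B $ i $ j) \<le> x) \<Longrightarrow> mdist A B \<le> x"
  unfolding mdist_def by (subst Max_le_iff) auto

lemma mdist_refl: "mdist A A = 0"
  unfolding mdist_def by (simp add: lsabs_def)

lemma gdiam_le: "(\<And>x y. x \<in> U \<Longrightarrow> y \<in> U \<Longrightarrow> d x y \<le> r) \<Longrightarrow> gdiam d U \<le> ereal r"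
  unfolding gdiam_def by (rule Sup_least) auto

lemma gdiam_ge0: "(\<And>x. d x x = 0) \<Longrightarrow> x \<in> U \<Longrightarrow> gdiam d U \<ge> 0"
  unfolding gdiam_def by (rule Sup_upper2[of "ereal (d x x)"]) auto

lemma cover_term_le:
  assumes d0: "\<And>x. d x x = 0" and g: "gdiam d U \<le> ereal r" and r: "r > 0" and s: "s \<ge> 0"
  shows "cover_term d s U \<le> ennreal (r powr s)"
proof (cases "U = {}")
  case False
  then obtain x where x: "x \<in> U" by auto
  have g0: "gdiam d U \<ge> 0" by (rule gdiam_ge0[OF d0 x])
  show ?thesis
  proof (cases "gdiam d U = 0")
    case True
    then show ?thesis using False r by (auto simp: cover_term_def)
  next
    case nz: False
    then obtain gg where gg: "gdiam d U = ereal gg" using g g0 by (cases "gdiam d U") auto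
    then have "0 < gg" "gg \<le> r" using g g0 nz by auto
    then have "gg powr s \<le> r powr s" using s by (intro powr_mono2) auto
    then show ?thesis using False nz gg by (auto simp: cover_term_def intro: ennreal_leI)
  qed
qed (simp add: cover_term_def)

lemma cover_term_zero_dim:
  assumes d0: "\<And>x. d x x = 0" and g: "gdiam d U \<le> ereal r" and "U \<noteq> {}"
  shows "cover_term d 0 U = 1"
proof -
  obtain x where x: "x \<in> U" using assms by auto
  have g0: "gdiam d U \<ge> 0" by (rule gdiam_ge0[OF d0 x])
  show ?thesis
  proof (cases "gdiam d U = 0")
    case nz: False
    then obtain gg where gg: "gdiam d U = ereal gg" using g g0 by (cases "gdiam d U") auto
    then have "0 < gg" using g0 nz by auto
    then show ?thesis using assms nz gg by (auto simp: cover_term_def)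
  qed (use assms in \<open>auto simp: cover_term_def\<close>)
qed


lemma gdiam_empty: "gdiam d {} = -\<infinity>"
  unfolding gdiam_def by (simp add: bot_ereal_def[symmetric])

lemma hd_le:
  fixes U :: "'j \<Rightarrow> 'x set" and B :: ennreal
  assumes cJ: "countable J" and cov: "S \<subseteq> (\<Union>j\<in>J. U j)"
    and dm: "\<And>j. j \<in> J \<Longrightarrow> gdiam d (U j) \<le> ereal \<delta>"
    and fs: "\<And>F. finite F \<Longrightarrow> F \<subseteq> J \<Longrightarrow> (\<Sum>j\<in>F. cover_term d s (U j)) \<le> B"
  shows "hausdorff_delta d s \<delta> S \<le> B"
proof (cases "finite J")
  case True
  obtain h where h: "bij_betw h {0..<card J} J" using ex_bij_betw_nat_finite[OF True] by blast
  define G where "G i = (if i < card J then U (h i) else {})" for i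
  have covG: "S \<subseteq> (\<Union>i. G i)"
  proof
    fix x assume "x \<in> S"
    then obtain j where j: "j \<in> J" "x \<in> U j" using cov by auto
    then obtain i where "i \<in> {0..<card J}" "h i = j" using h by (metis bij_betw_iff_bijections)
    then show "x \<in> (\<Union>i. G i)" using j by (auto simp: G_def)
  qed
  have dG: "\<forall>i. gdiam d (G i) \<le> ereal \<delta>"
  proof
    fix i show "gdiam d (G i) \<le> ereal \<delta>"
    proof (cases "i < card J")
      case True
      then have "h i \<in> J" using h by (auto simp: bij_betw_def)
      then show ?thesis using dm True by (simp add: G_def)
    qed (simp add: G_def gdiam_empty)
  qed
  have "(\<Sum>i. cover_term d s (G i)) = (\<Sum>i\<in>{0..<card J}. cover_term d s (G i))"
    by (rule suminf_finite) (auto simp: G_def cover_term_def)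
  also have "\<dots> = (\<Sum>i\<in>{0..<card J}. cover_term d s (U (h i)))"
    by (rule sum.cong) (auto simp: G_def)
  also have "\<dots> = (\<Sum>j\<in>J. cover_term d s (U j))"
    using sum.reindex_bij_betw[OF h, of "\<lambda>j. cover_term d s (U j)"] by simp
  also have "\<dots> \<le> B" using fs True by simp
  finally have "(\<Sum>i. cover_term d s (G i)) \<le> B" .
  then show ?thesis unfolding hausdorff_delta_def
    by (intro INF_lower2[of G]) (use covG dG in auto)
next
  case False
  define g where "g = from_nat_into J"
  have g: "bij_betw g UNIV J" unfolding g_def by (rule bij_betw_from_nat_into[OF cJ False])
  define G where "G i = U (g i)" for i
  have covG: "S \<subseteq> (\<Union>i. G i)"
  proof
    fix x assume "x \<in> S"
    then obtain j where j: "j \<in> J" "x \<in> U j" using cov by auto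
    then obtain i where "g i = j" using g by (metis bij_betw_iff_bijections)
    then show "x \<in> (\<Union>i. G i)" using j by (auto simp: G_def)
  qed
  have dG: "\<forall>i. gdiam d (G i) \<le> ereal \<delta>"
    using dm g by (auto simp: G_def bij_betw_def)
  have "(\<Sum>i. cover_term d s (G i)) \<le> B"
  proof -
    have "(\<Sum>i<n. cover_term d s (G i)) \<le> B" for n
    proof -
      have inj: "inj_on g {..<n}" using g by (auto simp: bij_betw_def inj_on_def)
      have "(\<Sum>i<n. cover_term d s (G i)) = (\<Sum>j\<in>g ` {..<n}. cover_term d s (U j))"
        by (simp add: sum.reindex[OF inj] G_def)
      also have "\<dots> \<le> B" by (rule fs) (use g in \<open>auto simp: bij_betw_def\<close>)
      finally show ?thesis .
    qed
    then show ?thesis by (simp add: suminf_eq_SUP SUP_least)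
  qed
  then show ?thesis unfolding hausdorff_delta_def
    by (intro INF_lower2[of G]) (use covG dG in auto)
qed

lemma geo_sum: "(\<Sum>R<M. e / 2 ^ Suc R) = (e::real) * (1 - 1 / 2 ^ M)"
  by (induction M) (auto simp: field_simps)

lemma sigma_bound:
  fixes h :: "nat \<times> 'b \<Rightarrow> ennreal"
  assumes b: "\<And>R G. finite G \<Longrightarrow> G \<subseteq> X R \<Longrightarrow> (\<Sum>x\<in>G. h (R,x)) \<le> ennreal (e / 2 ^ Suc R)"
    and e: "e \<ge> 0" and F: "finite F" "F \<subseteq> Sigma UNIV X"
  shows "(\<Sum>j\<in>F. h j) \<le> ennreal e"
proof -
  define M where "M = Suc (Max (insert 0 (fst ` F)))"
  have Mb: "R < M" if "(R,x) \<in> F" for R x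
  proof -
    have "R \<le> Max (insert 0 (fst ` F))" using F that by (intro Max_ge) force+
    then show ?thesis by (simp add: M_def)
  qed
  define FR where "FR R = {x. (R,x) \<in> F}" for R
  have finFR: "finite (FR R)" for R
  proof -
    have "FR R = snd ` (F \<inter> ({R} \<times> UNIV))" by (force simp: FR_def)
    then show ?thesis using F by simp
  qed
  have sub: "F \<subseteq> Sigma {..<M} FR" using Mb by (auto simp: FR_def)
  have "(\<Sum>j\<in>F. h j) \<le> (\<Sum>j\<in>Sigma {..<M} FR. h j)"
    by (rule sum_mono2) (use sub finFR in auto)
  also have "\<dots> = (\<Sum>R<M. \<Sum>x\<in>FR R. h (R,x))"
    by (subst sum.Sigma) (use finFR in auto)
  also have "\<dots> \<le> (\<Sum>R<M. ennreal (e / 2 ^ Suc R))"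
    by (rule sum_mono, rule b) (use finFR F in \<open>auto simp: FR_def\<close>)
  also have "\<dots> = ennreal (\<Sum>R<M. e / 2 ^ Suc R)" using e by simp
  also have "\<dots> \<le> ennreal e"
  proof (intro ennreal_leI)
    have "e * (1 - 1 / 2 ^ M) \<le> e * 1" using e by (intro mult_left_mono) auto
    then show "(\<Sum>R<M. e / 2 ^ Suc R) \<le> e" by (simp only: geo_sum)
  qed
  finally show ?thesis .
qed

lemma hm_zero:
  assumes "\<And>\<delta> e. \<delta> > 0 \<Longrightarrow> e > 0 \<Longrightarrow> hausdorff_delta d s \<delta> S \<le> ennreal e"
  shows "hausdorff_measure d s S = 0"
proof -
  have "hausdorff_delta d s \<delta> S = 0" if "\<delta> > 0" for \<delta>
  proof -
    have "hausdorff_delta d s \<delta> S \<le> 0"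
      by (rule ennreal_le_epsilon) (use assms[OF that] in auto)
    then show ?thesis by simp
  qed
  then show ?thesis unfolding hausdorff_measure_def by simp
qed

lemma hd_ge1:
  assumes d0: "\<And>x. d x x = 0" and S: "S \<noteq> {}"
  shows "hausdorff_delta d 0 \<delta> S \<ge> 1"
  unfolding hausdorff_delta_def
proof (rule INF_greatest)
  fix U assume U: "U \<in> {U :: nat \<Rightarrow> _. S \<subseteq> (\<Union>i. U i) \<and> (\<forall>i. gdiam d (U i) \<le> ereal \<delta>)}"
  then obtain i where i: "U i \<noteq> {}" using S by blast
  have "gdiam d (U i) \<le> ereal \<delta>" using U by auto
  then have c1: "cover_term d 0 (U i) = 1" by (rule cover_term_zero_dim[OF d0 _ i])
  have "cover_term d 0 (U i) \<le> (\<Sum>j<Suc i. cover_term d 0 (U j))"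
    by (rule member_le_sum[where f = "\<lambda>j. cover_term d 0 (U j)"]) auto
  also have "\<dots> \<le> (\<Sum>j. cover_term d 0 (U j))" unfolding suminf_eq_SUP by (rule SUP_upper) auto
  finally have "cover_term d 0 (U i) \<le> (\<Sum>j. cover_term d 0 (U j))" .
  then show "1 \<le> (\<Sum>j. cover_term d 0 (U j))" using c1 by simp
qed


definition box :: "nat \<Rightarrow> ('a::zero fls ^ 'n::finite ^ 'm::finite) set" where
  "box R = {A. \<forall>i j. sm (- int R) (A $ i $ j)}"

lemma in_some_box: "\<exists>R. (A::'a::zero fls ^ 'n::finite ^ 'm::finite) \<in> box R"
proof -
  define R where "R = Max (range (\<lambda>(i,j). nat (- fls_subdegree (A $ i $ j))))"
  have "sm (- int R) (A $ i $ j)" for i j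
  proof -
    have "nat (- fls_subdegree (A $ i $ j)) \<le> R" unfolding R_def by (rule Max_ge) auto
    then have "- int R \<le> fls_subdegree (A $ i $ j)" by linarith
    then show ?thesis using sm_subdeg sm_mono by blast
  qed
  then show ?thesis by (auto simp: box_def)
qed

definition cdom :: "nat \<Rightarrow> ('m::finite \<Rightarrow> int) \<Rightarrow> ('m \<times> 'n::finite \<times> int) set" where
  "cdom R L = Sigma UNIV (\<lambda>i. (UNIV :: 'n set) \<times> {- int R..<L i})"

lemma finite_dom: "finite (cdom R L)"
  unfolding cdom_def by (intro finite_SigmaI) auto

lemma card_dom: "card (cdom R L :: ('m::finite \<times> 'n::finite \<times> int) set) = (\<Sum>i\<in>UNIV. CARD('n) * nat (L i + int R))"
  unfolding cdom_def by (subst card_SigmaI) (auto simp: card_cartesian_product)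

definition piece :: "nat \<Rightarrow> ('m::finite \<Rightarrow> int) \<Rightarrow> ('m \<times> 'n::finite \<times> int \<Rightarrow> 'a) \<Rightarrow> ('a::zero fls ^ 'n ^ 'm) set" where
  "piece R L c = {A \<in> box R. \<forall>(i,j,l) \<in> cdom R L. fls_nth (A $ i $ j) l = c (i,j,l)}"

lemma piece_cover:
  assumes "A \<in> box R"
  shows "A \<in> piece R L (restrict (\<lambda>(i,j,l). fls_nth (A $ i $ j) l) (cdom R L))"
    and "restrict (\<lambda>(i,j,l). fls_nth (A $ i $ j) l) (cdom R L) \<in> PiE (cdom R L) (\<lambda>_. UNIV)"
  using assms by (auto simp: piece_def)

lemma piece_agree:
  assumes "A \<in> piece R L c" "A' \<in> piece R L c" "l < L i"
  shows "fls_nth (A $ i $ j) l = fls_nth (A' $ i $ j) l"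
proof (cases "l < - int R")
  case True
  then show ?thesis using assms by (auto simp: piece_def box_def sm_def)
next
  case False
  then have "(i,j,l) \<in> cdom R L" using assms by (auto simp: cdom_def)
  then show ?thesis using assms unfolding piece_def by fastforce
qed

lemma sm_piece:
  assumes "A \<in> piece R L c" "A' \<in> piece R L c" "t \<le> L i"
  shows "sm t (A $ i $ j - A' $ i $ j)"
  using piece_agree[OF assms(1,2)] assms(3) by (auto simp: sm_def)

lemma card_PiE_dom: "card (PiE (cdom R L :: ('m::finite \<times> 'n::finite \<times> int) set) (\<lambda>_. UNIV :: 'a::finite set)) = CARD('a) ^ card (cdom R L :: ('m \<times> 'n \<times> int) set)"
  by (simp add: card_PiE finite_dom)

lemma finite_PiE_dom: "finite (PiE (cdom R L) (\<lambda>_. UNIV :: 'a::finite set))"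
  by (intro finite_PiE finite_dom) auto

lemma mdist_sm:
  assumes "\<And>i j. sm t (A $ i $ j - B $ i $ j)"
  shows "mdist A (B :: 'a::{field,finite} fls ^ 'n::finite ^ 'm::finite) \<le> real CARD('a) powr (- real_of_int t)"
  by (rule mdist_le) (use assms lsabs_le_iff in auto)

lemma sum_cover_bound:
  assumes "finite G" "G \<subseteq> X" "finite X" "\<And>c. c \<in> X \<Longrightarrow> cover_term d s (U c) \<le> ennreal r" "r \<ge> 0"
  shows "(\<Sum>c\<in>G. cover_term d s (U c)) \<le> ennreal (real (card X) * r)"
proof -
  have "(\<Sum>c\<in>G. cover_term d s (U c)) \<le> (\<Sum>c\<in>X. cover_term d s (U c))"
    by (rule sum_mono2) (use assms in auto)
  also have "\<dots> \<le> of_nat (card X) * ennreal r" by (rule sum_bounded_above) (use assms in auto)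
  also have "\<dots> = ennreal (real (card X) * r)" using assms by (simp add: ennreal_mult ennreal_of_nat_eq_real_of_nat)
  finally show ?thesis .
qed

lemma case_a:
  fixes S :: "('a::{field,finite} fls ^ 'n::finite ^ 'm::finite) set"
  assumes s: "s > real (CARD('m) * CARD('n))" and \<delta>: "\<delta> > 0" and e: "e > 0"
  shows "hausdorff_delta mdist s \<delta> S \<le> ennreal e"
proof -
  define kr where "kr = real CARD('a)"
  have kr: "kr > 1" using card_field_ge2[where 'a='a] by (simp add: kr_def)
  define mn where "mn = real (CARD('m) * CARD('n))"
  have mn0: "mn \<ge> 0" by (simp add: mn_def)
  define x where "x = kr powr (mn - s)"
  have x1: "x < 1" "x > 0" using kr s by (auto simp: x_def mn_def intro!: powr_less_one)
  have T_ex: "\<exists>T::nat. kr powr (- real T) \<le> \<delta> \<and> kr powr (mn * (real T + real R)) * kr powr (- real T * s) \<le> e / 2 ^ Suc R" for R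
  proof -
    define y where "y = e / 2 ^ Suc R / kr powr (mn * real R)"
    have y: "y > 0" using e kr by (simp add: y_def)
    obtain T1 where T1: "x ^ T1 < y" using real_arch_pow_inv[OF y x1(1)] by blast
    obtain T2 where T2: "(1/kr) ^ T2 < \<delta>" using real_arch_pow_inv[OF \<delta>, of "1/kr"] kr by auto
    define T where "T = max T1 T2"
    have "(1/kr) ^ T \<le> (1/kr) ^ T2" using kr by (intro power_decreasing) (auto simp: T_def)
    moreover have "kr powr (- real T) = (1/kr) ^ T" using kr
      by (simp add: powr_minus_divide powr_realpow power_one_over)
    ultimately have c1: "kr powr (- real T) \<le> \<delta>" using T2 by linarith
    have "x ^ T \<le> x ^ T1" using x1 by (intro power_decreasing) (auto simp: T_def)
    have xT: "x ^ T = kr powr (real T * (mn - s))" using kr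
      by (simp add: x_def powr_realpow[symmetric] powr_powr mult.commute)
    have "kr powr (mn * (real T + real R)) * kr powr (- real T * s)
        = kr powr (mn * real R) * kr powr (real T * (mn - s))"
      by (simp add: powr_add[symmetric] algebra_simps)
    also have "\<dots> = kr powr (mn * real R) * x ^ T" by (simp add: xT)
    also have "\<dots> \<le> kr powr (mn * real R) * y"
      using \<open>x ^ T \<le> x ^ T1\<close> T1 by (intro mult_left_mono) auto
    also have "\<dots> = e / 2 ^ Suc R" using kr by (simp add: y_def)
    finally show ?thesis using c1 by blast
  qed
  obtain T where T: "\<And>R. kr powr (- real (T R)) \<le> \<delta> \<and> kr powr (mn * (real (T R) + real R)) * kr powr (- real (T R) * s) \<le> e / 2 ^ Suc R"
    using T_ex by metis
  define L where "L R = (\<lambda>_::'m. int (T R))" for R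
  define X where "X R = PiE (cdom R (L R) :: ('m \<times> 'n \<times> int) set) (\<lambda>_. UNIV :: 'a set)" for R
  define U where "U = (\<lambda>(R,c). piece R (L R) c :: ('a fls ^ 'n ^ 'm) set)"
  have "hausdorff_delta mdist s \<delta> S \<le> ennreal e"
  proof (rule hd_le[where J = "Sigma UNIV X" and U = U])
    show "countable (Sigma UNIV X)"
      by (rule countable_SIGMA) (auto simp: X_def finite_PiE_dom intro!: countable_finite)
    show "S \<subseteq> (\<Union>j\<in>Sigma UNIV X. U j)"
    proof
      fix A assume "A \<in> S"
      obtain R where R: "A \<in> box R" using in_some_box by blast
      show "A \<in> (\<Union>j\<in>Sigma UNIV X. U j)"
        using piece_cover[OF R, of "L R"] by (force simp: X_def U_def)
    qed
    have dm: "gdiam mdist (U (R,c)) \<le> ereal (kr powr (- real (T R)))" for R c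
    proof (rule gdiam_le)
      fix A A' assume "A \<in> U (R,c)" "A' \<in> U (R,c)"
      then show "mdist A A' \<le> kr powr (- real (T R))"
        using mdist_sm[of "int (T R)" A A'] sm_piece[of A R "L R" c A' "int (T R)"]
        by (auto simp: U_def L_def kr_def)
    qed
    show "gdiam mdist (U j) \<le> ereal \<delta>" if "j \<in> Sigma UNIV X" for j
      using dm[of "fst j" "snd j"] T[of "fst j"] by (cases j) (auto simp: order_trans)
    fix F assume F: "finite F" "F \<subseteq> Sigma UNIV X"
    show "(\<Sum>j\<in>F. cover_term mdist s (U j)) \<le> ennreal e"
    proof (rule sigma_bound[OF _ _ F])
      fix R G assume G: "finite G" "G \<subseteq> X R"
      have ct: "cover_term mdist s (U (R,c)) \<le> ennreal ((kr powr (- real (T R))) powr s)" for c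
        by (rule cover_term_le[OF _ dm]) (use kr s mn0 in \<open>auto simp: mdist_refl mn_def intro: order_trans[OF _ less_imp_le[OF s]]\<close>)
      have "(\<Sum>c\<in>G. cover_term mdist s (U (R,c))) \<le> ennreal (real (card (X R)) * (kr powr (- real (T R))) powr s)"
        by (rule sum_cover_bound[OF G]) (use ct in \<open>auto simp: X_def finite_PiE_dom\<close>)
      also have "real (card (X R)) * (kr powr (- real (T R))) powr s
          = kr powr (mn * (real (T R) + real R)) * kr powr (- real (T R) * s)"
      proof -
        have "card (cdom R (L R) :: ('m \<times> 'n \<times> int) set) = CARD('m) * CARD('n) * (T R + R)"
          by (simp add: card_dom L_def nat_add_distrib)
        then have "real (card (X R)) = kr powr (mn * (real (T R) + real R))"
          using kr by (simp add: X_def card_PiE_dom kr_def mn_def powr_realpow[symmetric])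
        then show ?thesis using kr by (simp add: powr_powr)
      qed
      also have "\<dots> \<le> e / 2 ^ Suc R" using T by blast
      finally show "(\<Sum>x\<in>G. cover_term mdist s (U (R, x))) \<le> ennreal (e / 2 ^ Suc R)"
        by (simp add: ennreal_leI order_trans)
    qed (use e in auto)
  qed
  then show ?thesis .
qed


lemma sm_poly_diff_zero:
  assumes "sm 1 (poly_to_ls (p::'a::{field,finite} poly) - poly_to_ls p')"
  shows "poly_to_ls p = poly_to_ls p'"
proof -
  have "fls_nth (poly_to_ls p - poly_to_ls p') l = 0" for l
  proof (cases "l < 1")
    case True then show ?thesis using assms by (auto simp: sm_def)
  next
    case False then show ?thesis by (simp add: poly_to_ls_pos)
  qed
  then show ?thesis by (simp add: fls_eq_iff)
qed

lemma diam_b: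
  fixes q :: "'a::{field,finite} poly ^ 'm::finite" and A A' :: "'a fls ^ 'n::finite ^ 'm"
  assumes q: "q \<noteq> 0"
    and L: "L = (\<lambda>i. if i = i0 q then int (Dq q) + 1 else int (Dq q) - r)"
    and A: "A \<in> piece R L c" "dist_int (qA q A) < real CARD('a) powr r"
    and A': "A' \<in> piece R L c" "dist_int (qA q A') < real CARD('a) powr r"
  shows "sm (int (Dq q) - r) (A $ i $ j - A' $ i $ j)"
proof (cases "r \<ge> 0")
  case True
  then show ?thesis by (intro sm_piece[OF A(1) A'(1)]) (auto simp: L)
next
  case False
  define D where "D = int (Dq q)"
  define t where "t = D - r"
  define k0 where "k0 = i0 q"
  define Q where "Q i = poly_to_ls (q $ i)" for i
  define d where "d i = A $ i $ j - A' $ i $ j" for i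
  have hQ: "sm (-D) (Q i)" for i unfolding Q_def D_def by (rule poly_to_ls_sm[OF degree_le_Dq])
  have hQ0: "Q k0 \<noteq> 0" "fls_subdegree (Q k0) = - D"
    using i0[OF q] poly_to_ls_ne0 poly_to_ls_subdeg[of "q $ i0 q"] by (auto simp: Q_def D_def k0_def)
  have hd: "sm t (d i)" if "i \<noteq> k0" for i
    unfolding d_def by (rule sm_piece[OF A(1) A'(1)]) (use that in \<open>auto simp: L t_def D_def k0_def\<close>)
  have hd0: "sm (D+1) (d k0)"
    unfolding d_def by (rule sm_piece[OF A(1) A'(1)]) (auto simp: L D_def k0_def)
  have hterm: "sm (-r) (Q i * d i)" if "i \<noteq> k0" for i
    using sm_mult[OF hQ[of i] hd[OF that]] by (simp add: t_def)
  have hterm0: "sm 1 (Q k0 * d k0)" using sm_mult[OF hQ[of k0] hd0] by simp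
  define v where "v = qA q A $ j"
  define v' where "v' = qA q A' $ j"
  have split: "(\<Sum>i\<in>UNIV. Q i * d i) = Q k0 * d k0 + (\<Sum>i\<in>UNIV - {k0}. Q i * d i)"
    by (rule sum.remove) auto
  have vv: "v - v' = (\<Sum>i\<in>UNIV. Q i * d i)"
    by (simp add: v_def v'_def qA_nth Q_def d_def sum_subtractf[symmetric] right_diff_distrib)
  have hrest: "sm (-r) (\<Sum>i\<in>UNIV - {k0}. Q i * d i)" by (rule sm_sum) (use hterm in auto)
  have hvv: "sm 1 (v - v')"
    unfolding vv split by (rule sm_add[OF hterm0 sm_mono[OF hrest]]) (use False in auto)
  obtain P :: "'a poly ^ 'n" where P: "\<And>j. lsabs (qA q A $ j - poly_to_ls (P $ j)) < real CARD('a) powr r"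
    using dist_int_less[OF A(2)] by blast
  obtain P' :: "'a poly ^ 'n" where P': "\<And>j. lsabs (qA q A' $ j - poly_to_ls (P' $ j)) < real CARD('a) powr r"
    using dist_int_less[OF A'(2)] by blast
  have sP: "sm (-r+1) (v - poly_to_ls (P $ j))"
    using P[of j] lsabs_less_iff[of "qA q A $ j - poly_to_ls (P $ j)" "-r"] by (simp add: v_def)
  have sP': "sm (-r+1) (v' - poly_to_ls (P' $ j))"
    using P'[of j] lsabs_less_iff[of "qA q A' $ j - poly_to_ls (P' $ j)" "-r"] by (simp add: v'_def)
  have "sm 1 (poly_to_ls (P $ j) - poly_to_ls (P' $ j))"
  proof -
    have e: "poly_to_ls (P $ j) - poly_to_ls (P' $ j) = (v - v') - (v - poly_to_ls (P $ j)) + (v' - poly_to_ls (P' $ j))"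
      by (simp add: algebra_simps)
    show ?thesis unfolding e
      by (intro sm_add sm_diff hvv sm_mono[OF sP] sm_mono[OF sP']) (use False in auto)
  qed
  then have PP: "poly_to_ls (P $ j) = poly_to_ls (P' $ j)" by (rule sm_poly_diff_zero)
  have "Q k0 * d k0 = (v - poly_to_ls (P $ j)) - (v' - poly_to_ls (P' $ j)) - (\<Sum>i\<in>UNIV - {k0}. Q i * d i)"
    using vv split PP by (simp add: algebra_simps)
  also have "sm (-r) \<dots>"
    by (intro sm_diff hrest sm_mono[OF sP] sm_mono[OF sP']) auto
  finally have "sm (-r) (Q k0 * d k0)" .
  then have hk0: "sm t (d k0)" using sm_cancel[OF hQ0(1)] hQ0(2) by (force simp: t_def)
  show ?thesis
  proof (cases "i = k0")
    case True then show ?thesis using hk0 by (simp add: d_def t_def D_def)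
  next
    case False then show ?thesis using hd[OF False] by (simp add: d_def t_def D_def)
  qed
qed


lemma tail_small:
  fixes f :: "'b \<Rightarrow> real"
  assumes sm: "f summable_on Z" and nn: "\<And>x. x \<in> Z \<Longrightarrow> f x \<ge> 0" and e: "e > 0"
  shows "\<exists>F0. finite F0 \<and> F0 \<subseteq> Z \<and> (\<forall>G. finite G \<longrightarrow> G \<subseteq> Z - F0 \<longrightarrow> sum f G \<le> e)"
proof -
  have "(sum f \<longlongrightarrow> infsum f Z) (finite_subsets_at_top Z)"
    using has_sum_infsum[OF sm] by (simp add: has_sum_def)
  then have "eventually (\<lambda>F. dist (sum f F) (infsum f Z) < e) (finite_subsets_at_top Z)"
    using e by (simp add: tendsto_iff)
  then obtain F0 where F0: "finite F0" "F0 \<subseteq> Z"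
    and H0: "\<forall>Y. finite Y \<and> F0 \<subseteq> Y \<and> Y \<subseteq> Z \<longrightarrow> dist (sum f Y) (infsum f Z) < e"
    unfolding eventually_finite_subsets_at_top by (elim exE conjE) (rule that)
  have "sum f G \<le> e" if G: "finite G" "G \<subseteq> Z - F0" for G
  proof -
    have H: "dist (sum f Y) (infsum f Z) < e" if "finite Y" "F0 \<subseteq> Y" "Y \<subseteq> Z" for Y
      using H0 that by blast
    have "dist (sum f F0) (infsum f Z) < e" using H[OF F0(1) _ F0(2)] by simp
    then have a: "sum f F0 > infsum f Z - e" by (simp add: dist_real_def abs_less_iff)
    have "sum f (F0 \<union> G) \<le> infsum f Z"
      by (rule finite_sum_le_infsum[OF sm]) (use F0 G nn in auto)
    moreover have "sum f (F0 \<union> G) = sum f F0 + sum f G"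
      by (rule sum.union_disjoint) (use F0 G in auto)
    ultimately show ?thesis using a by linarith
  qed
  then show ?thesis using F0 by blast
qed

lemma countable_polyvec: "countable (UNIV :: ('a::{zero,finite} poly ^ 'm::finite) set)"
proof -
  have "UNIV = (\<Union>M. {q::'a poly ^ 'm. \<forall>i. degree (q $ i) \<le> M})"
    using degree_le_Dq by blast
  moreover have "countable (\<Union>M. {q::'a poly ^ 'm. \<forall>i. degree (q $ i) \<le> M})"
    by (rule countable_UN) (auto intro!: countable_finite finite_deg_bounded)
  ultimately show ?thesis by simp
qed

lemma count_ineq:
  fixes kr t s e nm1 n D R :: real
  assumes kr: "kr > 1" and t: "t \<ge> 0" and es: "e \<le> s - nm1"
  shows "kr powr (n * (D + 1 + R) + nm1 * (t + R)) * kr powr (- t * s)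
     \<le> kr powr (n * (R + 1) + nm1 * R) * (kr powr (D * n) * kr powr (- t * e))"
proof -
  have "t * (nm1 + e - s) \<le> 0" using t es by (intro mult_nonneg_nonpos) auto
  then have ex: "n * (D + 1 + R) + nm1 * (t + R) + (- t * s) \<le> n * (R + 1) + nm1 * R + (D * n + (- t * e))"
    by (simp add: algebra_simps)
  show ?thesis using kr
    by (simp only: powr_add[symmetric]) (rule powr_mono[OF ex], simp)
qed


lemma psi_nonneg:
  assumes "\<And>q. psi q = 0 \<or> (\<exists>r::int. psi q = real CARD('a) powr real_of_int r)"
  shows "psi (q :: 'a::{field,finite} poly ^ 'm) \<ge> 0"
  using assms[of q] by auto

lemma case_b:
  fixes psi :: "'a::{field,finite} poly ^ 'm::finite \<Rightarrow> real"
  assumes psi_values: "\<And>q. psi q = 0 \<or> (\<exists>r::int. psi q = real CARD('a) powr real_of_int r)"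
    and Bb: "\<And>q. psi q \<le> B" and B0: "B > 0"
    and summ: "(\<lambda>q. pnorm q ^ CARD('n) * (psi q / pnorm q) powr e) summable_on (UNIV - {0})"
    and es: "e \<le> s - real (CARD('n) * (CARD('m) - 1))"
    and s: "s \<ge> 0" and \<delta>: "\<delta> > 0" and \<epsilon>: "\<epsilon> > 0"
  shows "hausdorff_delta mdist s \<delta> (W_set psi :: ('a fls ^ 'n::finite ^ 'm) set) \<le> ennreal \<epsilon>"
proof -
  define kr where "kr = real CARD('a)"
  have kr: "kr > 1" using card_field_ge2[where 'a='a] by (simp add: kr_def)
  define n where "n = CARD('n)"
  define nm1 where "nm1 = real (CARD('n) * (CARD('m) - 1))"
  define f where "f q = pnorm q ^ CARD('n) * (psi q / pnorm q) powr e" for q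
  define rr where "rr q = (SOME r::int. psi q = kr powr real_of_int r)" for q
  have psi0: "psi q \<ge> 0" for q using psi_nonneg[OF psi_values] .
  have rr: "psi q = kr powr real_of_int (rr q)" if "psi q > 0" for q
  proof -
    have "\<exists>r::int. psi q = kr powr real_of_int r" using psi_values[of q] that by (auto simp: kr_def)
    then show ?thesis unfolding rr_def by (rule someI_ex)
  qed
  define tt where "tt q = int (Dq q) - rr q" for q
  define Lq where "Lq q = (\<lambda>i. if i = i0 q then int (Dq q) + 1 else tt q)" for q
  define C where "C R = kr powr (real n * (real R + 1) + nm1 * real R)" for R :: nat
  have C: "C R > 0" for R using kr by (simp add: C_def)
  have fnn: "f q \<ge> 0" for q
    unfolding f_def using psi0[of q] vnorm_nonneg[of "\<chi> i. poly_to_ls (q $ i)"]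
    by (intro mult_nonneg_nonneg zero_le_power) (auto simp: pnorm_def)
  have "\<forall>R. \<exists>F0. finite F0 \<and> F0 \<subseteq> UNIV - {0} \<and> (\<forall>G. finite G \<longrightarrow> G \<subseteq> (UNIV - {0}) - F0 \<longrightarrow> sum f G \<le> \<epsilon> / 2 ^ Suc R / C R)"
  proof
    fix R show "\<exists>F0. finite F0 \<and> F0 \<subseteq> UNIV - {0} \<and> (\<forall>G. finite G \<longrightarrow> G \<subseteq> (UNIV - {0}) - F0 \<longrightarrow> sum f G \<le> \<epsilon> / 2 ^ Suc R / C R)"
    proof (rule tail_small)
      have "f = (\<lambda>q. pnorm q ^ CARD('n) * (psi q / pnorm q) powr e)" by (rule ext) (simp add: f_def)
      then show "f summable_on UNIV - {0}" using summ by simp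
    qed (use fnn \<epsilon> C in auto)
  qed
  from choice[OF this] obtain F0 where F0all: "\<forall>R. finite (F0 R) \<and> F0 R \<subseteq> UNIV - {0} \<and> (\<forall>G. finite G \<longrightarrow> G \<subseteq> (UNIV - {0}) - F0 R \<longrightarrow> sum f G \<le> \<epsilon> / 2 ^ Suc R / C R)" ..
  have F0: "\<And>R. finite (F0 R)"
    "\<And>R G. finite G \<Longrightarrow> G \<subseteq> (UNIV - {0}) - F0 R \<Longrightarrow> sum f G \<le> \<epsilon> / 2 ^ Suc R / C R"
    using F0all by simp_all
  obtain N1 :: nat where N1: "B / min \<delta> 1 < kr ^ N1" using real_arch_pow[OF kr] by blast
  define N where "N R = max N1 (Suc (Max (insert 0 (Dq ` F0 R))))" for R
  have NF0: "Dq q < N R" if "q \<in> F0 R" for q R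
  proof -
    have "Dq q \<le> Max (insert 0 (Dq ` F0 R))" using F0(1)[of R] that by (intro Max_ge) auto
    then show ?thesis by (simp add: N_def)
  qed
  define TQ where "TQ R = {q. q \<noteq> 0 \<and> psi q > 0 \<and> N R \<le> Dq q}" for R
  have rho: "psi q / pnorm q \<le> min \<delta> 1 \<and> psi q / pnorm q = kr powr (- real_of_int (tt q)) \<and> tt q \<ge> 0"
    if q: "q \<in> TQ R" for q R
  proof -
    have q0: "q \<noteq> 0" "psi q > 0" "N R \<le> Dq q" using q by (auto simp: TQ_def)
    have pn: "pnorm q = kr ^ Dq q" using pnorm_eq[OF q0(1)] by (simp add: kr_def)
    have "kr ^ N1 \<le> kr ^ Dq q" using kr q0(3) by (intro power_increasing) (auto simp: N_def)
    then have "B / min \<delta> 1 < pnorm q" using N1 pn by linarith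
    then have "B < min \<delta> 1 * pnorm q" using \<delta> by (simp add: divide_less_eq mult.commute)
    then have "psi q < min \<delta> 1 * pnorm q" using Bb[of q] by linarith
    moreover have pp: "pnorm q > 0" using pn kr by simp
    ultimately have r1: "psi q / pnorm q \<le> min \<delta> 1"
      by (subst pos_divide_le_eq) auto
    have r2: "psi q / pnorm q = kr powr (- real_of_int (tt q))"
      using rr[OF q0(2)] pn kr by (simp add: tt_def powr_realpow[symmetric] powr_diff[symmetric])
    have le1: "kr powr (- real_of_int (tt q)) \<le> 1" using r1 r2 by linarith
    have "tt q \<ge> 0"
    proof (rule ccontr)
      assume "\<not> tt q \<ge> 0"
      then have "0 < - real_of_int (tt q)" by simp
      then have "kr powr 0 < kr powr (- real_of_int (tt q))" by (rule powr_less_mono[OF _ kr])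
      then show False using le1 kr by simp
    qed
    then show ?thesis using r1 r2 by blast
  qed
  define P where "P R q = PiE (cdom R (Lq q) :: ('m \<times> 'n \<times> int) set) (\<lambda>_. UNIV :: 'a set)" for R q
  define X where "X R = Sigma (TQ R) (P R)" for R
  define U where "U = (\<lambda>(R::nat, (q::'a poly ^ 'm, c)). piece R (Lq q) c \<inter> {A :: 'a fls ^ 'n ^ 'm. dist_int (qA q A) < psi q})"
  have dmb: "gdiam mdist (U (R,(q,c))) \<le> ereal (psi q / pnorm q)" if q: "q \<in> TQ R" for R q c
  proof (rule gdiam_le)
    fix A A' assume AA: "A \<in> U (R,(q,c))" "A' \<in> U (R,(q,c))"
    have q0: "q \<noteq> 0" "psi q > 0" using q by (auto simp: TQ_def)
    have "sm (int (Dq q) - rr q) (A $ i $ j - A' $ i $ j)" for i j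
    proof (rule diam_b[OF q0(1)])
      show "Lq q = (\<lambda>i. if i = i0 q then int (Dq q) + 1 else int (Dq q) - rr q)"
        unfolding Lq_def tt_def by (rule refl)
    qed (use AA rr[OF q0(2)] in \<open>auto simp: U_def kr_def\<close>)
    then have "mdist A A' \<le> real CARD('a) powr (- real_of_int (tt q))"
      by (intro mdist_sm) (simp add: tt_def)
    then have "mdist A A' \<le> kr powr (- real_of_int (tt q))" by (simp add: kr_def)
    then show "mdist A A' \<le> psi q / pnorm q" using rho[OF q] by simp
  qed
  show ?thesis
  proof (rule hd_le[where J = "Sigma UNIV X" and U = U])
    show "countable (Sigma UNIV X)"
    proof (rule countable_SIGMA)
      fix R :: nat
      show "countable (X R)" unfolding X_def
      proof (rule countable_SIGMA)
        show "countable (TQ R)" by (rule countable_subset[OF _ countable_polyvec]) simp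
      qed (auto simp: P_def finite_PiE_dom intro!: countable_finite)
    qed simp
    show "W_set psi \<subseteq> (\<Union>j\<in>Sigma UNIV X. U j)"
    proof
      fix A :: "'a fls ^ 'n ^ 'm" assume A: "A \<in> W_set psi"
      obtain R where R: "A \<in> box R" using in_some_box by blast
      have inf: "infinite {q. dist_int (qA q A) < psi q}" using A by (simp add: W_set_def)
      have fin: "finite ({0} \<union> {q::'a poly ^ 'm. \<forall>i. degree (q $ i) \<le> N R})"
        using finite_deg_bounded[of "N R"] by simp
      have "infinite ({q. dist_int (qA q A) < psi q} - ({0} \<union> {q::'a poly ^ 'm. \<forall>i. degree (q $ i) \<le> N R}))"
        by (rule Diff_infinite_finite[OF fin inf])
      then obtain q where "q \<in> {q. dist_int (qA q A) < psi q} - ({0} \<union> {q::'a poly ^ 'm. \<forall>i. degree (q $ i) \<le> N R})"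
        using infinite_imp_nonempty by blast
      then have q: "dist_int (qA q A) < psi q" "q \<noteq> 0" "\<not> (\<forall>i. degree (q $ i) \<le> N R)"
        by simp_all
      then obtain i where "degree (q $ i) > N R" by (meson not_le)
      then have "N R \<le> Dq q" using degree_le_Dq[of q i] by linarith
      moreover have "psi q > 0" using q(1) dist_int_nonneg[of "qA q A"] by linarith
      ultimately have qT: "q \<in> TQ R" using q(2) by (simp add: TQ_def)
      define c where "c = restrict (\<lambda>(i,j,l). fls_nth (A $ i $ j) l) (cdom R (Lq q))"
      have c: "c \<in> P R q" "A \<in> piece R (Lq q) c" using piece_cover[OF R, of "Lq q"] by (simp_all add: c_def P_def)
      have "(R, (q, c)) \<in> Sigma UNIV X" using qT c(1) by (simp add: X_def)
      moreover have "A \<in> U (R, (q, c))" using c(2) q(1) by (simp add: U_def)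
      ultimately show "A \<in> (\<Union>j\<in>Sigma UNIV X. U j)" by blast
    qed
    show "gdiam mdist (U j) \<le> ereal \<delta>" if jJ: "j \<in> Sigma UNIV X" for j
    proof -
      obtain R x where jx: "j = (R, x)" "x \<in> X R" using jJ by blast
      obtain q c where qc: "x = (q, c)" "q \<in> TQ R" using jx(2) unfolding X_def by blast
      have j: "j = (R,(q,c))" "q \<in> TQ R" using jx qc by simp_all
      show ?thesis using dmb[OF j(2), of c] rho[OF j(2)] j(1) by (auto simp: order_trans)
    qed
    fix F assume F: "finite F" "F \<subseteq> Sigma UNIV X"
    show "(\<Sum>j\<in>F. cover_term mdist s (U j)) \<le> ennreal \<epsilon>"
    proof (rule sigma_bound[OF _ _ F])
      fix R G assume G: "finite G" "G \<subseteq> X R"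
      define G1 where "G1 = fst ` G"
      have G1: "finite G1" "G1 \<subseteq> TQ R" using G by (auto simp: G1_def X_def)
      have finP: "finite (P R q)" for q by (simp add: P_def finite_PiE_dom)
      have perq: "(\<Sum>c\<in>P R q. cover_term mdist s (U (R,(q,c)))) \<le> ennreal (C R * f q)" if q: "q \<in> TQ R" for q
      proof -
        define rho where "rho = psi q / pnorm q"
        have rho0: "rho > 0" using q rho[OF q] kr by (simp add: rho_def)
        have ct: "cover_term mdist s (U (R,(q,c))) \<le> ennreal (rho powr s)" for c
          by (rule cover_term_le[OF _ dmb[OF q, folded rho_def]]) (use rho0 s in \<open>auto simp: mdist_refl\<close>)
        have "(\<Sum>c\<in>P R q. cover_term mdist s (U (R,(q,c)))) \<le> ennreal (real (card (P R q)) * rho powr s)"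
          by (rule sum_cover_bound[OF finP subset_refl finP]) (use ct rho0 in auto)
        also have "real (card (P R q)) * rho powr s \<le> C R * f q"
        proof -
          have q0: "q \<noteq> 0" using q by (simp add: TQ_def)
          have t0: "tt q \<ge> 0" using rho[OF q] by blast
          have rhoe: "rho = kr powr (- real_of_int (tt q))" using rho[OF q] by (simp add: rho_def)
          have cd: "card (cdom R (Lq q) :: ('m \<times> 'n \<times> int) set)
              = n * (Dq q + 1 + R) + (CARD('m) - 1) * (n * (nat (tt q) + R))"
          proof -
            have "card (cdom R (Lq q) :: ('m \<times> 'n \<times> int) set) = (\<Sum>i\<in>UNIV. n * nat (Lq q i + int R))"
              by (simp add: card_dom n_def)
            also have "\<dots> = n * nat (Lq q (i0 q) + int R) + (\<Sum>i\<in>UNIV - {i0 q}. n * nat (Lq q i + int R))"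
              by (rule sum.remove) auto
            also have "(\<Sum>i\<in>UNIV - {i0 q}. n * nat (Lq q i + int R)) = (\<Sum>i\<in>UNIV - {i0 q}. n * (nat (tt q) + R))"
              by (rule sum.cong) (use t0 in \<open>auto simp: Lq_def nat_add_distrib\<close>)
            also have "\<dots> = (CARD('m) - 1) * (n * (nat (tt q) + R))"
              by (simp add: card_Diff_singleton)
            also have "n * nat (Lq q (i0 q) + int R) = n * (Dq q + 1 + R)"
              by (simp add: Lq_def nat_add_distrib)
            finally show ?thesis .
          qed
          have "real (card (P R q)) = kr ^ card (cdom R (Lq q) :: ('m \<times> 'n \<times> int) set)"
            by (simp add: P_def card_PiE_dom kr_def)
          also have "\<dots> = kr powr (real n * (real (Dq q) + 1 + real R) + nm1 * (real_of_int (tt q) + real R))"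
          proof -
            define m1 where "m1 = CARD('m) - 1"
            have cd': "card (cdom R (Lq q) :: ('m \<times> 'n \<times> int) set) = n * (Dq q + 1 + R) + m1 * (n * (nat (tt q) + R))"
              using cd by (simp add: m1_def)
            have nm: "nm1 = real m1 * real n" by (simp add: nm1_def m1_def n_def)
            have tn: "real (nat (tt q)) = real_of_int (tt q)" using t0 by simp
            have "real (card (cdom R (Lq q) :: ('m \<times> 'n \<times> int) set)) = real n * (real (Dq q) + 1 + real R) + nm1 * (real_of_int (tt q) + real R)"
              unfolding cd' nm of_nat_add of_nat_mult tn[symmetric] by (simp add: algebra_simps)
            then show ?thesis using kr by (simp add: powr_realpow[symmetric])
          qed
          finally have cP: "real (card (P R q)) = kr powr (real n * (real (Dq q) + 1 + real R) + nm1 * (real_of_int (tt q) + real R))" .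
          have fq: "f q = kr powr (real (Dq q) * real n) * kr powr (- real_of_int (tt q) * e)"
            using kr rho[OF q] pnorm_eq[OF q0]
            by (simp add: f_def kr_def[symmetric] n_def powr_realpow[symmetric] powr_powr)
          have rs: "rho powr s = kr powr (- real_of_int (tt q) * s)" using kr by (simp add: rhoe powr_powr)
          show ?thesis unfolding cP rs fq C_def
            by (rule count_ineq[OF kr]) (use t0 es in \<open>auto simp: nm1_def\<close>)
        qed
        then have "ennreal (real (card (P R q)) * rho powr s) \<le> ennreal (C R * f q)" by (rule ennreal_leI)
        finally show ?thesis .
      qed
      have "(\<Sum>x\<in>G. cover_term mdist s (U (R, x))) \<le> (\<Sum>x\<in>Sigma G1 (P R). cover_term mdist s (U (R, x)))"
      proof (rule sum_mono2)
        show "finite (Sigma G1 (P R))" using G1(1) finP by (intro finite_SigmaI) auto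
        show "G \<subseteq> Sigma G1 (P R)" using G(2) unfolding G1_def X_def by (auto intro: rev_image_eqI)
      qed auto
      also have "\<dots> = (\<Sum>q\<in>G1. \<Sum>c\<in>P R q. cover_term mdist s (U (R, (q, c))))"
        by (subst sum.Sigma) (use G1 finP in auto)
      also have "\<dots> \<le> (\<Sum>q\<in>G1. ennreal (C R * f q))"
        by (rule sum_mono) (use perq G1 in auto)
      also have "\<dots> = ennreal (C R * sum f G1)"
      proof -
        have "(\<Sum>q\<in>G1. ennreal (C R * f q)) = ennreal (\<Sum>q\<in>G1. C R * f q)"
          by (rule sum_ennreal) (use C[of R] fnn in \<open>auto intro: mult_nonneg_nonneg less_imp_le\<close>)
        then show ?thesis by (simp add: sum_distrib_left)
      qed
      also have "\<dots> \<le> ennreal (\<epsilon> / 2 ^ Suc R)"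
      proof (rule ennreal_leI)
        have "G1 \<subseteq> (UNIV - {0}) - F0 R"
          using G1(2) NF0 by (force simp: TQ_def)
        then have "sum f G1 \<le> \<epsilon> / 2 ^ Suc R / C R" by (rule F0(2)[OF G1(1)])
        then show "C R * sum f G1 \<le> \<epsilon> / 2 ^ Suc R" using C[of R] by (simp add: field_simps)
      qed
      finally show "(\<Sum>x\<in>G. cover_term mdist s (U (R, x))) \<le> ennreal (\<epsilon> / 2 ^ Suc R)" .
    qed (use \<epsilon> in auto)
  qed
qed


theorem lemma10:
  fixes psi :: "'a::{field,finite} poly ^ 'm::finite \<Rightarrow> real"
  assumes psi_values: "\<And>q. psi q = 0 \<or> (\<exists>r::int. psi q = real CARD('a) powr real_of_int r)"
    and bounded: "\<exists>B. \<forall>q. psi q \<le> B"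
    and infpos: "infinite {q. psi q > 0}"
  shows "hausdorff_dim mdist (W_set psi :: ('a fls ^ 'n::finite ^ 'm) set)
           \<le> ereal (real (CARD('n) * (CARD('m) - 1))) + min (eta psi TYPE('n)) (ereal (real CARD('n)))"
proof -
  obtain B0 where B0: "\<And>q. psi q \<le> B0" using bounded by blast
  define B where "B = max B0 1"
  have Bb: "\<And>q. psi q \<le> B" "B > 0"
    unfolding B_def using B0 by (simp add: le_max_iff_disj, simp)
  define nm1 where "nm1 = real (CARD('n) * (CARD('m) - 1))"
  define Rhs where "Rhs = ereal nm1 + min (eta psi TYPE('n)) (ereal (real CARD('n)))"
  define W where "W = (W_set psi :: ('a fls ^ 'n ^ 'm) set)"
  have key: "hausdorff_measure mdist s W = 0" if s: "s \<ge> 0" "ereal s > Rhs" for s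
  proof (rule hm_zero)
    fix \<delta> \<epsilon> :: real assume \<delta>: "\<delta> > 0" and \<epsilon>: "\<epsilon> > 0"
    show "hausdorff_delta mdist s \<delta> W \<le> ennreal \<epsilon>"
    proof (cases "eta psi TYPE('n) \<le> ereal (real CARD('n))")
      case True
      then have "ereal s > ereal nm1 + eta psi TYPE('n)" using s by (simp add: Rhs_def min_def)
      then have "eta psi TYPE('n) < ereal (s - nm1)"
        by (cases "eta psi TYPE('n)") auto
      then obtain x where x: "x \<in> {ereal e | e. (\<lambda>q. pnorm q ^ CARD('n) * (psi q / pnorm q) powr e) summable_on (UNIV - {0})}"
        "x < ereal (s - nm1)"
        unfolding eta_def by (subst (asm) Inf_less_iff) blast
      then obtain e where e: "x = ereal e" "(\<lambda>q. pnorm q ^ CARD('n) * (psi q / pnorm q) powr e) summable_on (UNIV - {0})"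
        by blast
      have es: "e \<le> s - nm1" using x(2) e(1) by simp
      show ?thesis unfolding W_def
        by (rule case_b[OF psi_values Bb e(2) _ s(1) \<delta> \<epsilon>]) (use es in \<open>simp add: nm1_def\<close>)
    next
      case False
      then have "ereal s > ereal nm1 + ereal (real CARD('n))" using s by (simp add: Rhs_def min_def)
      then have "s > nm1 + real CARD('n)" by simp
      moreover have "nm1 + real CARD('n) = real (CARD('m) * CARD('n))"
      proof -
        obtain m1 where m1: "CARD('m) = Suc m1" using not0_implies_Suc[of "CARD('m)"] by auto
        have "CARD('n) * (CARD('m) - 1) + CARD('n) = CARD('m) * CARD('n)"
          unfolding m1 by simp
        then show ?thesis unfolding nm1_def by (metis of_nat_add)
      qed
      ultimately show ?thesis by (intro case_a \<delta> \<epsilon>) simp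
    qed
  qed
  have W0: "W \<noteq> {}"
  proof -
    have "{q. psi q > 0} \<subseteq> {q. dist_int (qA q (0 :: 'a fls ^ 'n ^ 'm)) < psi q}"
      using dist_int_zero by (auto simp: qA_zero intro: le_less_trans)
    then have "infinite {q. dist_int (qA q (0 :: 'a fls ^ 'n ^ 'm)) < psi q}"
      using infpos finite_subset by blast
    then have "0 \<in> W" by (simp add: W_def W_set_def)
    then show ?thesis by blast
  qed
  have Rhs0: "Rhs \<ge> 0"
  proof (rule ccontr)
    assume "\<not> Rhs \<ge> 0"
    then have "ereal 0 > Rhs" by (metis not_le zero_ereal_def)
    then have h0: "hausdorff_measure mdist 0 W = 0" by (intro key) auto
    have "1 \<le> hausdorff_delta mdist 0 1 W" by (rule hd_ge1[OF mdist_refl W0])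
    also have "\<dots> \<le> hausdorff_measure mdist 0 W" unfolding hausdorff_measure_def
      by (rule SUP_upper) auto
    finally show False using h0 by simp
  qed
  have "hausdorff_dim mdist W \<le> Rhs"
  proof (rule ereal_le_epsilon2)
    fix e :: real assume e: "e > 0"
    show "hausdorff_dim mdist W \<le> Rhs + ereal e"
    proof (cases Rhs)
      case (real r)
      then have r: "r \<ge> 0" using Rhs0 by simp
      have "ereal (r + e) \<in> {ereal s | s. s \<ge> 0 \<and> hausdorff_measure mdist s W = 0}"
        using key[of "r + e"] r e real by auto
      then have "hausdorff_dim mdist W \<le> ereal (r + e)" unfolding hausdorff_dim_def by (rule Inf_lower)
      then show ?thesis using real by simp
    qed (use Rhs0 in auto)
  qed
  then show ?thesis by (simp add: W_def Rhs_def nm1_def)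
qed

end
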